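(* Let $\mathfrak g=\bigoplus_{i=1}^{r}\mathfrak g_i$ be a Lie algebra decomposed as a direct sum of ideals, and let $k\ge1$. For each $i$, let $\mathcal{L}\mathrm{Der}_k(\mathfrak g_i,\mathfrak g_i)$ be the set of linear maps $f:\mathfrak g\to\mathfrak g$ with $f(\mathfrak g_l)=0$ for $l\ne i$, $f(\mathfrak g_i)\subseteq\mathfrak g_i$ and $f|_{\mathfrak g_i}\in\mathcal{L}\mathrm{Der}_k(\mathfrak g_i)$. For $i\ne j$, let $\mathcal{L}\mathrm{Der}_k(\mathfrak g_i,\mathfrak g_j)$ be the set of linear maps $f:\mathfrak g\to\mathfrak g$ such that $f(\mathfrak g_l)=0$ for all $l\ne i$, $f(\mathfrak g)\subseteq\mathfrak g_j$, $f([y_1,\dots,y_{k+1}])=0$ for all $y_1,\dots,y_{k+1}\in\mathfrak g_i$, and for every position $s\in\{1,\dots,k+1\}$ one has $[z_1,\dots,z_{s-1},f(y),z_{s+1},\dots,z_{k+1}]=0$ for all $y\in\mathfrak g_i$ and all $z_t\in\mathfrak g_j$. Then $$\mathcal{L}\mathrm{Der}_k(\mathfrak g)=\sum_{i,j}\mathcal{L}\mathrm{Der}_k(\mathfrak g_i,\mathfrak g_j).$$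
   Context: All Lie algebras are finite-dimensional over an algebraically closed field $\mathbb F$ of characteristic zero. For a Lie algebra $\mathfrak g$, an integer $k\ge1$ and $x_1,\dots,x_{k+1}\in\mathfrak g$, write $[x_1,\dots,x_{k+1}]$ for the right-nested bracket $[x_1,[x_2,[\dots,[x_k,x_{k+1}]\dots]]]$. A Leibniz-derivation of order $k$ of $\mathfrak g$ is a linear map $P:\mathfrak g\to\mathfrak g$ such that $P([x_1,\dots,x_{k+1}])=\sum_{i=1}^{k+1}[x_1,\dots,x_{i-1},P(x_i),x_{i+1},\dots,x_{k+1}]$ for all $x_1,\dots,x_{k+1}\in\mathfrak g$; the set of these is denoted $\mathcal{L}\mathrm{Der}_k(\mathfrak g)$. *)

theory Defs
  imports "HOL-Computational_Algebra.Polynomial"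
begin

definition alg_closed :: "('k::field) itself \<Rightarrow> bool" where
  "alg_closed _ \<longleftrightarrow> (\<forall>p :: 'k poly. degree p > 0 \<longrightarrow> (\<exists>x. poly p x = 0))"

definition fin_dim_vs :: "('k::field \<Rightarrow> 'v::ab_group_add \<Rightarrow> 'v) \<Rightarrow> bool" where
  "fin_dim_vs scale \<longleftrightarrow> vector_space scale \<and>
     (\<exists>B. finite B \<and> module.span scale B = UNIV)"

definition lie_algebra :: "('k::field \<Rightarrow> 'v::ab_group_add \<Rightarrow> 'v) \<Rightarrow> ('v \<Rightarrow> 'v \<Rightarrow> 'v) \<Rightarrow> bool" where
  "lie_algebra scale br \<longleftrightarrow> vector_space scale \<and>
     (\<forall>x. Vector_Spaces.linear scale scale (br x)) \<and>
     (\<forall>y. Vector_Spaces.linear scale scale (\<lambda>x. br x y)) \<and>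
     (\<forall>x. br x x = 0) \<and>
     (\<forall>x y z. br x (br y z) + br y (br z x) + br z (br x y) = 0)"

text \<open>Right-nested bracket [x1,[x2,[...,[xk,x(k+1)]...]]] of a nonempty list.\<close>
fun rnest :: "('v::zero \<Rightarrow> 'v \<Rightarrow> 'v) \<Rightarrow> 'v list \<Rightarrow> 'v" where
  "rnest br [] = 0"
| "rnest br [x] = x"
| "rnest br (x # y # xs) = br x (rnest br (y # xs))"

definition leibniz_rule :: "('v::comm_monoid_add \<Rightarrow> 'v \<Rightarrow> 'v) \<Rightarrow> nat \<Rightarrow> 'v set \<Rightarrow> ('v \<Rightarrow> 'v) \<Rightarrow> bool" where
  "leibniz_rule br k S P \<longleftrightarrow>
     (\<forall>xs. length xs = k + 1 \<and> set xs \<subseteq> S \<longrightarrow>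
        P (rnest br xs) = (\<Sum>i<k+1. rnest br (xs[i := P (xs ! i)])))"

definition LDer :: "('k::field \<Rightarrow> 'v::ab_group_add \<Rightarrow> 'v) \<Rightarrow> ('v \<Rightarrow> 'v \<Rightarrow> 'v) \<Rightarrow> nat \<Rightarrow> ('v \<Rightarrow> 'v) set" where
  "LDer scale br k = {P. Vector_Spaces.linear scale scale P \<and> leibniz_rule br k UNIV P}"

definition LDer_pair :: "('k::field \<Rightarrow> 'v::ab_group_add \<Rightarrow> 'v) \<Rightarrow> ('v \<Rightarrow> 'v \<Rightarrow> 'v) \<Rightarrow>
    (nat \<Rightarrow> 'v set) \<Rightarrow> nat \<Rightarrow> nat \<Rightarrow> nat \<Rightarrow> nat \<Rightarrow> ('v \<Rightarrow> 'v) set" where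
  "LDer_pair scale br G r k i j =
    (if i = j then
       {f. Vector_Spaces.linear scale scale f
           \<and> (\<forall>l\<in>{1..r} - {i}. \<forall>x\<in>G l. f x = 0)
           \<and> f ` G i \<subseteq> G i
           \<and> leibniz_rule br k (G i) f}
     else
       {f. Vector_Spaces.linear scale scale f
           \<and> (\<forall>l\<in>{1..r} - {i}. \<forall>x\<in>G l. f x = 0)
           \<and> range f \<subseteq> G j
           \<and> (\<forall>ys. length ys = k + 1 \<and> set ys \<subseteq> G i \<longrightarrow> f (rnest br ys) = 0)
           \<and> (\<forall>s<k+1. \<forall>y\<in>G i. \<forall>zs. length zs = k + 1 \<and> set zs \<subseteq> G j \<longrightarrow>
                 rnest br (zs[s := f y]) = 0)})"

end

theory Submission
  imports Defs
begin


lemma lin_add: "Vector_Spaces.linear s s f \<Longrightarrow> f (x + y) = f x + f y"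
  unfolding Vector_Spaces.linear_iff by blast
lemma lin_scale: "Vector_Spaces.linear s s f \<Longrightarrow> f (s c x) = s c (f x)"
  unfolding Vector_Spaces.linear_iff by blast

lemma rnest_ind: "(P :: 'a::zero list \<Rightarrow> bool) [] \<Longrightarrow> (\<And>x. P [x]) \<Longrightarrow> (\<And>x y xs. P (y#xs) \<Longrightarrow> P (x#y#xs)) \<Longrightarrow> P xs"
  by (rule rnest.induct[of "\<lambda>_ xs. P xs"]) auto
lemma lin_0: "Vector_Spaces.linear s s f \<Longrightarrow> f 0 = 0"
  using lin_add[of s f 0 0] by simp
lemma lin_sum: "Vector_Spaces.linear s s f \<Longrightarrow> f (sum g A) = (\<Sum>a\<in>A. f (g a))"
  by (induct A rule: infinite_finite_induct) (simp_all add: lin_0 lin_add)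
lemma lin_comp: "Vector_Spaces.linear s s f \<Longrightarrow> Vector_Spaces.linear s s g \<Longrightarrow>
   Vector_Spaces.linear s s (\<lambda>x. g (f x))"
  using Vector_Spaces.linear_compose[of s s f s g] by (simp add: o_def)

lemma rnest_Cons: "xs \<noteq> [] \<Longrightarrow> rnest br (x # xs) = br x (rnest br xs)"
  by (cases xs) auto

lemma rnest_zero:
  assumes "\<forall>x. br 0 x = 0" "\<forall>x. br x 0 = 0"
  shows "2 \<le> length xs \<Longrightarrow> 0 \<in> set xs \<Longrightarrow> rnest br xs = 0"
proof (induction xs rule: rnest_ind)
  case (3 x y xs)
  show ?case
  proof (cases "x = 0")
    case True then show ?thesis using assms by simp
  next
    case False
    then have "0 \<in> set (y # xs)" using 3 by auto
    show ?thesis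
    proof (cases xs)
      case Nil then show ?thesis using \<open>0 \<in> set (y # xs)\<close> assms by simp
    next
      case (Cons a l)
      then have "rnest br (y # xs) = 0" using 3 \<open>0 \<in> set (y # xs)\<close> by simp
      then show ?thesis using assms by simp
    qed
  qed
qed auto

lemma rnest_Z0:
  assumes "\<forall>x. br 0 x = 0" "\<forall>x. br x 0 = 0"
    and "2 \<le> length xs" "s < length xs" "xs ! s = 0"
  shows "rnest br xs = 0"
  using rnest_zero[OF assms(1,2) assms(3)] assms(4,5) by (metis nth_mem)

lemma rnest_upd_add:
  assumes "\<forall>x y z. br (x + y) z = br x z + br y z" "\<forall>x y z. br x (y + z) = br x y + br x z"
  shows "t < length xs \<Longrightarrow> rnest br (xs[t := a + b]) = rnest br (xs[t := a]) + rnest br (xs[t := b])"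
proof (induction xs arbitrary: t rule: rnest_ind)
  case (3 x y xs)
  show ?case
  proof (cases t)
    case 0 then show ?thesis using assms by simp
  next
    case (Suc t')
    have ne: "\<And>v. (y # xs)[t' := v] \<noteq> []" by (cases t') auto
    have lt: "t' < length (y # xs)" using 3 Suc by simp
    have e: "rnest br ((x#y#xs)[t:=v]) = br x (rnest br ((y#xs)[t':=v]))" for v
    proof -
      have "(x#y#xs)[t:=v] = x # (y#xs)[t':=v]" using Suc by simp
      then show ?thesis using rnest_Cons[OF ne] by metis
    qed
    show ?thesis unfolding e 3(1)[OF lt] using assms by simp
  qed
qed auto

lemma rnest_upd_0:
  assumes "\<forall>z. br 0 z = 0" "\<forall>x. br x 0 = 0"
  shows "t < length xs \<Longrightarrow> rnest br (xs[t := 0]) = 0"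
proof (induction xs arbitrary: t rule: rnest_ind)
  case (3 x y xs)
  show ?case
  proof (cases t)
    case 0 then show ?thesis using assms by simp
  next
    case (Suc t')
    have ne: "\<And>v. (y # xs)[t' := v] \<noteq> []" by (cases t') auto
    have lt: "t' < length (y # xs)" using 3 Suc by simp
    have e: "rnest br ((x#y#xs)[t:=v]) = br x (rnest br ((y#xs)[t':=v]))" for v
    proof -
      have "(x#y#xs)[t:=v] = x # (y#xs)[t':=v]" using Suc by simp
      then show ?thesis using rnest_Cons[OF ne] by metis
    qed
    show ?thesis unfolding e 3(1)[OF lt] using assms by simp
  qed
qed auto

lemma rnest_upd_sum:
  assumes "\<forall>x y z. br (x + y) z = br x z + br y z" "\<forall>x y z. br x (y + z) = br x y + br x z"
    "\<forall>z. br 0 z = 0" "\<forall>x. br x 0 = 0" "t < length xs"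
  shows "rnest br (xs[t := sum h A]) = (\<Sum>a\<in>A. rnest br (xs[t := h a]))"
  by (induct A rule: infinite_finite_induct)
     (simp_all add: rnest_upd_0[OF assms(3,4,5)] rnest_upd_add[OF assms(1,2,5)])




locale dsum =
  fixes scale :: "'k::field \<Rightarrow> 'v::ab_group_add \<Rightarrow> 'v"
    and br :: "'v \<Rightarrow> 'v \<Rightarrow> 'v"
    and G :: "nat \<Rightarrow> 'v set"
    and r :: nat
  assumes vs: "vector_space scale"
    and linr: "\<And>x. Vector_Spaces.linear scale scale (br x)"
    and linl: "\<And>y. Vector_Spaces.linear scale scale (\<lambda>x. br x y)"
    and alt: "\<And>x. br x x = 0"
    and sub: "\<forall>i\<in>{1..r}. module.subspace scale (G i)"
    and idl: "\<forall>i\<in>{1..r}. \<forall>x y. y \<in> G i \<longrightarrow> br x y \<in> G i"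
    and ex: "\<forall>x. \<exists>y. (\<forall>i\<in>{1..r}. y i \<in> G i) \<and> x = (\<Sum>i=1..r. y i)"
    and uq: "\<forall>y. (\<forall>i\<in>{1..r}. y i \<in> G i) \<and> (\<Sum>i=1..r. y i) = 0 \<longrightarrow> (\<forall>i\<in>{1..r}. y i = 0)"
begin

lemma md: "module scale" using vs by (simp add: module_iff_vector_space)

lemma br_addl: "br (x + y) z = br x z + br y z" using lin_add[OF linl] .
lemma br_addr: "br x (y + z) = br x y + br x z" using lin_add[OF linr] .
lemma br_0l[simp]: "br 0 z = 0" using lin_0[OF linl] .
lemma br_0r[simp]: "br x 0 = 0" using lin_0[OF linr] .
lemma br_suml: "br (sum f A) y = (\<Sum>a\<in>A. br (f a) y)" using lin_sum[OF linl] .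
lemma br_sumr: "br y (sum f A) = (\<Sum>a\<in>A. br y (f a))" using lin_sum[OF linr] .

lemma anti: "br x y = - br y x"
proof -
  have "0 = br (x + y) (x + y)" by (simp add: alt)
  also have "\<dots> = br x x + br x y + (br y x + br y y)" by (simp add: br_addl br_addr)
  finally have "br x y + br y x = 0" by (simp add: alt)
  then show ?thesis by (simp add: eq_neg_iff_add_eq_0)
qed

lemma Gsub: "i \<in> {1..r} \<Longrightarrow> module.subspace scale (G i)" using sub by blast
lemma G0: "i \<in> {1..r} \<Longrightarrow> 0 \<in> G i" using module.subspace_0[OF md Gsub] by blast
lemma Gadd: "i \<in> {1..r} \<Longrightarrow> x \<in> G i \<Longrightarrow> y \<in> G i \<Longrightarrow> x + y \<in> G i"
  using module.subspace_add[OF md Gsub] by blast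
lemma Gdiff: "i \<in> {1..r} \<Longrightarrow> x \<in> G i \<Longrightarrow> y \<in> G i \<Longrightarrow> x - y \<in> G i"
  using module.subspace_diff[OF md Gsub] by blast
lemma Gneg: "i \<in> {1..r} \<Longrightarrow> x \<in> G i \<Longrightarrow> - x \<in> G i"
  using module.subspace_neg[OF md Gsub] by blast
lemma Gscale: "i \<in> {1..r} \<Longrightarrow> x \<in> G i \<Longrightarrow> scale c x \<in> G i"
  using module.subspace_scale[OF md Gsub] by blast

lemma idr: "i \<in> {1..r} \<Longrightarrow> y \<in> G i \<Longrightarrow> br x y \<in> G i" using idl by blast
lemma idlft: "i \<in> {1..r} \<Longrightarrow> x \<in> G i \<Longrightarrow> br x y \<in> G i"
  using anti[of x y] idr[of i x y] Gneg by metis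

lemma uniq2:
  assumes "\<forall>l\<in>{1..r}. y l \<in> G l" "\<forall>l\<in>{1..r}. z l \<in> G l"
    "(\<Sum>l=1..r. y l) = (\<Sum>l=1..r. z l)" "i \<in> {1..r}"
  shows "y i = z i"
proof -
  have "\<forall>l\<in>{1..r}. y l - z l = 0"
    using uq[rule_format, of "\<lambda>l. y l - z l"] assms Gdiff by (simp add: sum_subtractf)
  then show ?thesis using assms(4) by simp
qed

lemma disj: "i \<in> {1..r} \<Longrightarrow> j \<in> {1..r} \<Longrightarrow> i \<noteq> j \<Longrightarrow> x \<in> G i \<Longrightarrow> x \<in> G j \<Longrightarrow> x = 0"
proof -
  assume a: "i \<in> {1..r}" "j \<in> {1..r}" "i \<noteq> j" "x \<in> G i" "x \<in> G j"
  let ?y = "\<lambda>l. if l = i then x else 0"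
  let ?z = "\<lambda>l. if l = j then x else 0"
  have "?y i = ?z i"
    by (rule uniq2) (use a G0 in \<open>auto simp: sum.delta\<close>)
  then show "x = 0" using a by simp
qed

definition proj :: "nat \<Rightarrow> 'v \<Rightarrow> 'v" where
  "proj i x = (SOME y. (\<forall>l\<in>{1..r}. y l \<in> G l) \<and> x = (\<Sum>l=1..r. y l)) i"

lemma proj_some: "(\<forall>l\<in>{1..r}. proj l x \<in> G l) \<and> x = (\<Sum>l=1..r. proj l x)"
  unfolding proj_def using someI_ex[OF ex[rule_format, of x]] by blast

lemma proj_G: "l \<in> {1..r} \<Longrightarrow> proj l x \<in> G l" using proj_some by blast
lemma proj_sum[simp]: "(\<Sum>l=1..r. proj l x) = x" using proj_some by metis
lemma proj_sum'[simp]: "(\<Sum>l=Suc 0..r. proj l x) = x" using proj_sum by (metis One_nat_def)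

lemma proj_eq:
  assumes "\<forall>l\<in>{1..r}. y l \<in> G l" "x = (\<Sum>l=1..r. y l)" "i \<in> {1..r}"
  shows "proj i x = y i"
  by (rule uniq2) (use assms proj_some in auto)

lemma proj_self: "i \<in> {1..r} \<Longrightarrow> x \<in> G i \<Longrightarrow> proj i x = x"
  using proj_eq[of "\<lambda>l. if l = i then x else 0" x i] G0 by (auto simp: sum.delta)

lemma proj_other: "i \<in> {1..r} \<Longrightarrow> l \<in> {1..r} \<Longrightarrow> l \<noteq> i \<Longrightarrow> x \<in> G l \<Longrightarrow> proj i x = 0"
  using proj_eq[of "\<lambda>m. if m = l then x else 0" x i] G0 by (auto simp: sum.delta)

lemma proj_0[simp]: "i \<in> {1..r} \<Longrightarrow> proj i 0 = 0"
  using proj_self G0 by blast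

lemma proj_lin: "i \<in> {1..r} \<Longrightarrow> Vector_Spaces.linear scale scale (proj i)"
  unfolding Vector_Spaces.linear_iff
proof (intro conjI allI)
  assume i: "i \<in> {1..r}"
  show "vector_space scale" by (rule vs)
  show "vector_space scale" by (rule vs)
  fix x y
  show "proj i (x + y) = proj i x + proj i y"
    by (rule proj_eq) (use i proj_G Gadd in \<open>auto simp: sum.distrib proj_sum\<close>)
next
  assume i: "i \<in> {1..r}"
  fix c x
  show "proj i (scale c x) = scale c (proj i x)"
    by (rule proj_eq) (use i proj_G Gscale in \<open>auto simp: module.scale_sum_right[OF md, symmetric] proj_sum\<close>)
qed

lemma proj_br: assumes i: "i \<in> {1..r}" shows "proj i (br x y) = br (proj i x) (proj i y)"
proof -
  have "br x y = (\<Sum>l=1..r. br (proj l x) y)"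
    using br_suml[of "\<lambda>l. proj l x" "{1..r}" y] by (simp add: proj_sum)
  then have "proj i (br x y) = br (proj i x) y"
    by (rule proj_eq[rotated]) (use i idlft proj_G in auto)
  also have "\<dots> = (\<Sum>m=1..r. br (proj i x) (proj m y))"
    using br_sumr[of "proj i x" "\<lambda>l. proj l y" "{1..r}"] by (simp add: proj_sum)
  also have "\<dots> = br (proj i x) (proj i y) + (\<Sum>m\<in>{1..r}-{i}. br (proj i x) (proj m y))"
    using i by (simp add: sum.remove)
  also have "(\<Sum>m\<in>{1..r}-{i}. br (proj i x) (proj m y)) = 0"
  proof (rule sum.neutral, rule ballI)
    fix m assume m: "m \<in> {1..r} - {i}"
    show "br (proj i x) (proj m y) = 0"
      by (rule disj[of i m]) (use i m idlft idr proj_G in auto)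
  qed
  finally show ?thesis by simp
qed

lemma proj_rnest: "i \<in> {1..r} \<Longrightarrow> proj i (rnest br xs) = rnest br (map (proj i) xs)"
  by (induction xs rule: rnest_ind) (auto simp: proj_br)

lemma rnest_ideal: "i \<in> {1..r} \<Longrightarrow> w \<in> set xs \<Longrightarrow> w \<in> G i \<Longrightarrow> rnest br xs \<in> G i"
  by (induction xs rule: rnest_ind) (auto simp: idr idlft)

lemma Z0: "2 \<le> length xs \<Longrightarrow> s < length xs \<Longrightarrow> xs ! s = 0 \<Longrightarrow> rnest br xs = 0"
  by (rule rnest_Z0) auto

lemma upd_sum: "t < length xs \<Longrightarrow> rnest br (xs[t := sum h A]) = (\<Sum>a\<in>A. rnest br (xs[t := h a]))"
  by (rule rnest_upd_sum) (auto simp: br_addl br_addr)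

lemma factor:
  assumes f: "Vector_Spaces.linear scale scale f" and i: "i \<in> {1..r}"
    and v: "\<forall>l\<in>{1..r}-{i}. \<forall>x\<in>G l. f x = 0"
  shows "f x = f (proj i x)"
proof -
  have "f x = (\<Sum>l=1..r. f (proj l x))" using lin_sum[OF f, of "\<lambda>l. proj l x" "{1..r}"]
    by (simp add: proj_sum)
  also have "\<dots> = f (proj i x) + (\<Sum>l\<in>{1..r}-{i}. f (proj l x))"
    using i by (simp add: sum.remove)
  also have "(\<Sum>l\<in>{1..r}-{i}. f (proj l x)) = 0"
    using v proj_G by (intro sum.neutral) auto
  finally show ?thesis by simp
qed

end



context dsum begin

lemma LDer_sum:
  assumes "finite A" "\<forall>a\<in>A. g a \<in> LDer scale br k"
  shows "(\<lambda>x. \<Sum>a\<in>A. g a x) \<in> LDer scale br k"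
proof -
  have lin: "Vector_Spaces.linear scale scale (\<lambda>x. \<Sum>a\<in>A. g a x)"
  proof -
    have vp: "vector_space_pair scale scale" using vs by (simp add: vector_space_pair_def)
    show ?thesis using assms by (intro vector_space_pair.linear_compose_sum[OF vp]) (auto simp: LDer_def)
  qed
  have "leibniz_rule br k UNIV (\<lambda>x. \<Sum>a\<in>A. g a x)"
    unfolding leibniz_rule_def
  proof (intro allI impI)
    fix xs :: "'v list" assume xs: "length xs = k + 1 \<and> set xs \<subseteq> UNIV"
    have "(\<Sum>a\<in>A. g a (rnest br xs)) = (\<Sum>a\<in>A. \<Sum>t<k+1. rnest br (xs[t := g a (xs ! t)]))"
      using assms xs by (intro sum.cong) (auto simp: LDer_def leibniz_rule_def)
    also have "\<dots> = (\<Sum>t<k+1. \<Sum>a\<in>A. rnest br (xs[t := g a (xs ! t)]))"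
      by (rule sum.swap)
    also have "\<dots> = (\<Sum>t<k+1. rnest br (xs[t := \<Sum>a\<in>A. g a (xs ! t)]))"
      using xs by (intro sum.cong) (auto simp: upd_sum)
    finally show "(\<Sum>a\<in>A. g a (rnest br xs)) = (\<Sum>t<k+1. rnest br (xs[t := \<Sum>a\<in>A. g a (xs ! t)]))" .
  qed
  then show ?thesis using lin by (simp add: LDer_def)
qed

lemma sum_single:
  assumes "s \<in> A" "finite A" "\<forall>t\<in>A. t \<noteq> s \<longrightarrow> g t = 0"
  shows "sum g A = g s"
proof -
  have "sum g A = g s + sum g (A - {s})" using assms by (simp add: sum.remove)
  also have "sum g (A - {s}) = 0" using assms by (intro sum.neutral) auto
  finally show ?thesis by simp
qed

lemma pair_in_LDer:
  assumes k: "k \<ge> 1" and i: "i \<in> {1..r}" and j: "j \<in> {1..r}"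
    and f: "f \<in> LDer_pair scale br G r k i j"
  shows "f \<in> LDer scale br k"
proof (cases "i = j")
  case True
  then have lin: "Vector_Spaces.linear scale scale f" and v: "\<forall>l\<in>{1..r}-{i}. \<forall>x\<in>G l. f x = 0"
    and im: "f ` G i \<subseteq> G i" and lb: "leibniz_rule br k (G i) f"
    using f by (auto simp: LDer_pair_def)
  have fp: "\<And>x. f x = f (proj i x)" using factor[OF lin i v] .
  have "leibniz_rule br k UNIV f" unfolding leibniz_rule_def
  proof (intro allI impI)
    fix xs :: "'v list" assume xs: "length xs = k + 1 \<and> set xs \<subseteq> UNIV"
    let ?ys = "map (proj i) xs"
    have ys: "length ?ys = k + 1 \<and> set ?ys \<subseteq> G i" using xs proj_G i by auto
    have "f (rnest br xs) = f (rnest br ?ys)" using fp proj_rnest i by metis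
    also have "\<dots> = (\<Sum>t<k+1. rnest br (?ys[t := f (?ys ! t)]))"
      using lb ys unfolding leibniz_rule_def by blast
    also have "\<dots> = (\<Sum>t<k+1. rnest br (xs[t := f (xs ! t)]))"
    proof (rule sum.cong[OF refl])
      fix t assume t: "t \<in> {..<k+1}"
      have w: "f (xs ! t) \<in> G i" using fp im proj_G i by blast
      have "f (?ys ! t) = f (xs ! t)" using t xs fp by simp
      then have "rnest br (?ys[t := f (?ys ! t)]) = rnest br (map (proj i) (xs[t := f (xs ! t)]))"
        using proj_self[OF i w] by (simp add: map_update)
      also have "\<dots> = proj i (rnest br (xs[t := f (xs ! t)]))" using proj_rnest i by simp
      also have "\<dots> = rnest br (xs[t := f (xs ! t)])"
        using t xs w by (intro proj_self i rnest_ideal[OF i, of "f (xs ! t)"]) (auto simp: set_update_memI)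
      finally show "rnest br (?ys[t := f (?ys ! t)]) = rnest br (xs[t := f (xs ! t)])" .
    qed
    finally show "f (rnest br xs) = (\<Sum>t<k+1. rnest br (xs[t := f (xs ! t)]))" .
  qed
  then show ?thesis using lin by (simp add: LDer_def)
next
  case False
  then have lin: "Vector_Spaces.linear scale scale f" and v: "\<forall>l\<in>{1..r}-{i}. \<forall>x\<in>G l. f x = 0"
    and rg: "range f \<subseteq> G j"
    and c1: "\<forall>ys. length ys = k + 1 \<and> set ys \<subseteq> G i \<longrightarrow> f (rnest br ys) = 0"
    and c2: "\<forall>s<k+1. \<forall>y\<in>G i. \<forall>zs. length zs = k + 1 \<and> set zs \<subseteq> G j \<longrightarrow>
                 rnest br (zs[s := f y]) = 0"
    using f by (auto simp: LDer_pair_def)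
  have fp: "\<And>x. f x = f (proj i x)" using factor[OF lin i v] .
  have "leibniz_rule br k UNIV f" unfolding leibniz_rule_def
  proof (intro allI impI)
    fix xs :: "'v list" assume xs: "length xs = k + 1 \<and> set xs \<subseteq> UNIV"
    let ?ys = "map (proj i) xs"
    let ?zs = "map (proj j) xs"
    have ys: "length ?ys = k + 1 \<and> set ?ys \<subseteq> G i" using xs proj_G i by auto
    have zs: "length ?zs = k + 1 \<and> set ?zs \<subseteq> G j" using xs proj_G j by auto
    have "f (rnest br xs) = f (rnest br ?ys)" using fp proj_rnest i by metis
    also have "\<dots> = 0" using c1 ys by blast
    also have "0 = (\<Sum>t<k+1. rnest br (xs[t := f (xs ! t)]))"
    proof (rule sum.neutral[symmetric], rule ballI)
      fix t assume t: "t \<in> {..<k+1}"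
      have w: "f (xs ! t) \<in> G j" using rg by blast
      have "rnest br (xs[t := f (xs ! t)]) = proj j (rnest br (xs[t := f (xs ! t)]))"
        using t xs w by (intro proj_self[symmetric] j rnest_ideal[OF j, of "f (xs ! t)"]) (auto simp: set_update_memI)
      also have "\<dots> = rnest br (?zs[t := f (xs ! t)])"
        using proj_rnest j proj_self[OF j w] by (simp add: map_update)
      also have "\<dots> = rnest br (?zs[t := f (proj i (xs ! t))])" using fp by metis
      also have "\<dots> = 0" using c2 t zs proj_G i by auto
      finally show "rnest br (xs[t := f (xs ! t)]) = 0" .
    qed
    finally show "f (rnest br xs) = (\<Sum>t<k+1. rnest br (xs[t := f (xs ! t)]))" .
  qed
  then show ?thesis using lin by (simp add: LDer_def)
qed

end



context dsum begin

lemma LDer_to_pair: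
  assumes k: "k \<ge> 1" and i: "i \<in> {1..r}" and j: "j \<in> {1..r}"
    and P: "P \<in> LDer scale br k"
  shows "(\<lambda>x. proj j (P (proj i x))) \<in> LDer_pair scale br G r k i j"
proof -
  have linP: "Vector_Spaces.linear scale scale P" and lbP: "leibniz_rule br k UNIV P"
    using P by (auto simp: LDer_def)
  have lb: "\<And>xs. length xs = k + 1 \<Longrightarrow> P (rnest br xs) = (\<Sum>t<k+1. rnest br (xs[t := P (xs ! t)]))"
    using lbP unfolding leibniz_rule_def by blast
  have P0: "P 0 = 0" using lin_0[OF linP] .
  have lin: "Vector_Spaces.linear scale scale (\<lambda>x. proj j (P (proj i x)))"
    using lin_comp[OF lin_comp[OF proj_lin[OF i] linP] proj_lin[OF j]] by simp
  have v: "\<forall>l\<in>{1..r}-{i}. \<forall>x\<in>G l. proj j (P (proj i x)) = 0"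
    using proj_other[OF i] P0 j by auto
  show ?thesis
  proof (cases "i = j")
    case True
    have lr: "leibniz_rule br k (G i) (\<lambda>x. proj j (P (proj i x)))" unfolding leibniz_rule_def
    proof (intro allI impI)
      fix xs assume xs: "length xs = k + 1 \<and> set xs \<subseteq> G i"
      have m: "map (proj i) xs = xs" using xs proj_self[OF i] by (intro map_idI) auto
      have r1: "proj i (rnest br xs) = rnest br xs" using proj_rnest[OF i] m by simp
      have "proj j (P (proj i (rnest br xs))) = proj i (\<Sum>t<k+1. rnest br (xs[t := P (xs ! t)]))"
        using r1 lb xs True by simp
      also have "\<dots> = (\<Sum>t<k+1. proj i (rnest br (xs[t := P (xs ! t)])))"
        by (rule lin_sum[OF proj_lin[OF i]])
      also have "\<dots> = (\<Sum>t<k+1. rnest br (xs[t := proj j (P (proj i (xs ! t)))]))"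
      proof (rule sum.cong[OF refl])
        fix t assume t: "t \<in> {..<k+1}"
        have "proj i (xs ! t) = xs ! t" using t xs proj_self[OF i] by (simp add: subset_iff)
        then show "proj i (rnest br (xs[t := P (xs ! t)])) = rnest br (xs[t := proj j (P (proj i (xs ! t)))])"
          using proj_rnest[OF i] m True by (simp add: map_update)
      qed
      finally show "proj j (P (proj i (rnest br xs))) = (\<Sum>t<k+1. rnest br (xs[t := proj j (P (proj i (xs ! t)))]))" .
    qed
    have im: "(\<lambda>x. proj j (P (proj i x))) ` G i \<subseteq> G i" using proj_G j True by auto
    show ?thesis unfolding LDer_pair_def if_P[OF True]
      by (rule CollectI, intro conjI lin v im lr)
  next
    case False
    have rg: "range (\<lambda>x. proj j (P (proj i x))) \<subseteq> G j" using proj_G j by auto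
    have c1: "\<forall>ys. length ys = k + 1 \<and> set ys \<subseteq> G i \<longrightarrow> proj j (P (proj i (rnest br ys))) = 0"
    proof (intro allI impI)
      fix ys :: "'v list" assume ys: "length ys = k + 1 \<and> set ys \<subseteq> G i"
      have m: "map (proj i) ys = ys" using ys proj_self[OF i] by (intro map_idI) auto
      have r1: "proj i (rnest br ys) = rnest br ys" using proj_rnest[OF i] m by simp
      have "proj j (P (proj i (rnest br ys))) = proj j (\<Sum>t<k+1. rnest br (ys[t := P (ys ! t)]))"
        using r1 lb ys by simp
      also have "\<dots> = (\<Sum>t<k+1. proj j (rnest br (ys[t := P (ys ! t)])))"
        by (rule lin_sum[OF proj_lin[OF j]])
      also have "\<dots> = 0"
      proof (rule sum.neutral, rule ballI)
        fix t assume t: "t \<in> {..<k+1}"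
        define s where "s = (if t = 0 then 1 else 0::nat)"
        have s: "s < k + 1" "s \<noteq> t" using k by (auto simp: s_def)
        have ysz: "proj j (ys ! s) = 0"
          using ys s proj_other[OF j i] False by (metis nth_mem subset_iff)
        have "proj j (rnest br (ys[t := P (ys ! t)])) = rnest br ((map (proj j) ys)[t := proj j (P (ys ! t))])"
          using proj_rnest[OF j] by (simp add: map_update)
        also have "\<dots> = 0"
          by (rule Z0[of _ s]) (use k ys s ysz in auto)
        finally show "proj j (rnest br (ys[t := P (ys ! t)])) = 0" .
      qed
      finally show "proj j (P (proj i (rnest br ys))) = 0" .
    qed
    have c2: "\<forall>s<k+1. \<forall>y\<in>G i. \<forall>zs. length zs = k + 1 \<and> set zs \<subseteq> G j \<longrightarrow>
                 rnest br (zs[s := proj j (P (proj i y))]) = 0"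
    proof (intro allI impI ballI)
      fix s y zs assume s: "s < k + 1" and y: "y \<in> G i" and zs: "length zs = k + 1 \<and> set zs \<subseteq> G j"
      have mz: "map (proj j) zs = zs" using zs proj_self[OF j] by (intro map_idI) auto
      have pi0: "\<And>z. z \<in> G j \<Longrightarrow> proj i z = 0" using proj_other[OF i j] False by metis
      have pjy: "proj j y = 0" using proj_other[OF j i] False y by metis
      define s' where "s' = (if s = 0 then 1 else 0::nat)"
      have s': "s' < k + 1" "s' \<noteq> s" using k by (auto simp: s'_def)
      let ?L = "zs[s := y]"
      have L0: "rnest br ?L = 0"
      proof -
        have "rnest br ?L \<in> G i" using s zs y by (intro rnest_ideal[OF i, of y]) (auto simp: set_update_memI)
        then have "rnest br ?L = proj i (rnest br ?L)" using proj_self[OF i] by simp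
        also have "\<dots> = rnest br (map (proj i) ?L)" by (rule proj_rnest[OF i])
        also have "\<dots> = 0"
          by (rule Z0[of _ s']) (use k zs s' pi0 in \<open>auto simp: subset_iff\<close>)
        finally show ?thesis .
      qed
      have "0 = proj j (P (rnest br ?L))" using L0 P0 j by simp
      also have "\<dots> = (\<Sum>t<k+1. proj j (rnest br (?L[t := P (?L ! t)])))"
      proof -
        have e: "P (rnest br ?L) = (\<Sum>t<k+1. rnest br (?L[t := P (?L ! t)]))"
          by (rule lb) (use zs in simp)
        show ?thesis unfolding e by (rule lin_sum[OF proj_lin[OF j]])
      qed
      also have "\<dots> = proj j (rnest br (?L[s := P (?L ! s)]))"
      proof (rule sum_single)
        show "s \<in> {..<k+1}" using s by simp
        show "finite {..<k+1}" by simp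
        show "\<forall>t\<in>{..<k+1}. t \<noteq> s \<longrightarrow> proj j (rnest br (?L[t := P (?L ! t)])) = 0"
        proof (intro ballI impI)
          fix t assume t: "t \<in> {..<k+1}" "t \<noteq> s"
          have "proj j (rnest br (?L[t := P (?L ! t)])) = rnest br (map (proj j) (?L[t := P (?L ! t)]))"
            by (rule proj_rnest[OF j])
          also have "\<dots> = 0"
            by (rule Z0[of _ s]) (use k zs s t pjy in auto)
          finally show "proj j (rnest br (?L[t := P (?L ! t)])) = 0" .
        qed
      qed
      also have "\<dots> = rnest br (zs[s := proj j (P y)])"
        using proj_rnest[OF j] s zs mz by (simp add: map_update)
      finally show "rnest br (zs[s := proj j (P (proj i y))]) = 0"
        using proj_self[OF i y] by simp
    qed
    show ?thesis unfolding LDer_pair_def if_not_P[OF False]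
      by (rule CollectI, intro conjI lin v rg c1 c2)
  qed
qed

theorem main:
  assumes k: "k \<ge> 1"
  shows "LDer scale br k =
    {f. \<exists>F. (\<forall>i\<in>{1..r}. \<forall>j\<in>{1..r}. F i j \<in> LDer_pair scale br G r k i j)
           \<and> f = (\<lambda>x. \<Sum>i=1..r. \<Sum>j=1..r. F i j x)}"
proof (intro set_eqI iffI)
  fix P assume P: "P \<in> LDer scale br k"
  have linP: "Vector_Spaces.linear scale scale P" using P by (simp add: LDer_def)
  let ?F = "\<lambda>i j x. proj j (P (proj i x))"
  have eqP: "P = (\<lambda>x. \<Sum>i=1..r. \<Sum>j=1..r. ?F i j x)"
  proof
    fix x
    have "(\<Sum>i=1..r. \<Sum>j=1..r. ?F i j x) = (\<Sum>i=1..r. P (proj i x))" by simp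
    also have "\<dots> = P x" using lin_sum[OF linP, of "\<lambda>i. proj i x" "{1..r}"] by simp
    finally show "P x = (\<Sum>i=1..r. \<Sum>j=1..r. ?F i j x)" by simp
  qed
  have allF: "\<forall>i\<in>{1..r}. \<forall>j\<in>{1..r}. ?F i j \<in> LDer_pair scale br G r k i j"
    using LDer_to_pair[OF k _ _ P] by blast
  show "P \<in> {f. \<exists>F. (\<forall>i\<in>{1..r}. \<forall>j\<in>{1..r}. F i j \<in> LDer_pair scale br G r k i j)
           \<and> f = (\<lambda>x. \<Sum>i=1..r. \<Sum>j=1..r. F i j x)}"
    by (rule CollectI, rule exI[of _ ?F], rule conjI[OF allF eqP])
next
  fix f assume "f \<in> {f. \<exists>F. (\<forall>i\<in>{1..r}. \<forall>j\<in>{1..r}. F i j \<in> LDer_pair scale br G r k i j)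
           \<and> f = (\<lambda>x. \<Sum>i=1..r. \<Sum>j=1..r. F i j x)}"
  then obtain F where F: "\<forall>i\<in>{1..r}. \<forall>j\<in>{1..r}. F i j \<in> LDer_pair scale br G r k i j"
    and f: "f = (\<lambda>x. \<Sum>i=1..r. \<Sum>j=1..r. F i j x)" by blast
  have "\<forall>i\<in>{1..r}. (\<lambda>x. \<Sum>j=1..r. F i j x) \<in> LDer scale br k"
  proof (intro ballI)
    fix i assume i: "i \<in> {1..r}"
    show "(\<lambda>x. \<Sum>j=1..r. F i j x) \<in> LDer scale br k"
      by (rule LDer_sum) (use F pair_in_LDer[OF k] i in auto)
  qed
  then show "f \<in> LDer scale br k"
    using LDer_sum[of "{1..r}" "\<lambda>i x. \<Sum>j=1..r. F i j x"] f by simp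
qed

end


theorem lemma3:
  fixes scale :: "'k::field_char_0 \<Rightarrow> 'v::ab_group_add \<Rightarrow> 'v"
    and br :: "'v \<Rightarrow> 'v \<Rightarrow> 'v"
    and G :: "nat \<Rightarrow> 'v set"
    and r k :: nat
  assumes "alg_closed TYPE('k)"
    and "fin_dim_vs scale"
    and "lie_algebra scale br"
    and "r \<ge> 1"
    and "k \<ge> 1"
    and "\<forall>i\<in>{1..r}. module.subspace scale (G i)"
    and "\<forall>i\<in>{1..r}. \<forall>x y. y \<in> G i \<longrightarrow> br x y \<in> G i"
    and "\<forall>x. \<exists>y. (\<forall>i\<in>{1..r}. y i \<in> G i) \<and> x = (\<Sum>i=1..r. y i)"
    and "\<forall>y. (\<forall>i\<in>{1..r}. y i \<in> G i) \<and> (\<Sum>i=1..r. y i) = 0 \<longrightarrow> (\<forall>i\<in>{1..r}. y i = 0)"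
  shows "LDer scale br k =
    {f. \<exists>F. (\<forall>i\<in>{1..r}. \<forall>j\<in>{1..r}. F i j \<in> LDer_pair scale br G r k i j)
           \<and> f = (\<lambda>x. \<Sum>i=1..r. \<Sum>j=1..r. F i j x)}"
proof -
  have ds: "dsum scale br G r"
    using assms(2,3,6-9) unfolding dsum_def fin_dim_vs_def lie_algebra_def by blast
  show ?thesis using dsum.main[OF ds assms(5)] .
qed

end
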